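(* Let $(l_n)$ and $(i_n)$ be integer sequences with $1\le l_n\le n$ and $1\le i_n\le n$, such that $l_n/n\to t\in(0,1]$ and $i_n/n\to x\in[0,1]$ with $t\ne x$. Then $$C(n,l_n,i_n)\longrightarrow C(t,x)\qquad(n\to\infty).$$
   Context: Let $H_j=\sum_{i=1}^j1/i$, $a(0,0)=0$ and $a(n,l)=2n+2(n+1)H_n-2(n+3-l)H_{n+1-l}-6l+6$ for $1\le l\le n$ (this is the expected number of comparisons of Quicksort on the fly on $n$ items until the $l$-th smallest is found). For $n\ge1$, $1\le i\le n$ and $1\le l\le n$, $C(n,l,i)=\frac1n\Big(n-1-a(n,l)+\mathbf 1_{l<i}\,a(i-1,l)+\mathbf 1_{l\ge i}\,a(i-1,i-1)+\mathbf 1_{l>i}\,a(n-i,l-i)\Big)$. $C(x)=1+2x\ln x+2(1-x)\ln(1-x)$ for $x\in[0,1]$ (with $0\ln0=0$) and $C(t,x)=C(x)+2\,\mathbf 1_{t<x}\big(-1+x+(1-t)\ln(1-t)-(1-x)\ln(1-x)-(x-t)\ln(x-t)\big)$ for $t,x\in[0,1]$. *)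

theory Defs
  imports "HOL-Analysis.Analysis"
begin

definition H :: "nat \<Rightarrow> real" where
  "H j = (\<Sum>k=1..j. 1 / real k)"

text \<open>a(0,0) = 0; for 1 <= l <= n the explicit formula (other arguments never used).\<close>
definition qa :: "nat \<Rightarrow> nat \<Rightarrow> real" where
  "qa n l = (if l = 0 then 0 else
     2 * real n + 2 * (real n + 1) * H n
     - 2 * (real n + 3 - real l) * H (n + 1 - l) - 6 * real l + 6)"

definition Cd :: "nat \<Rightarrow> nat \<Rightarrow> nat \<Rightarrow> real" where
  "Cd n l i = (1 / real n) * (real n - 1 - qa n l
      + (if l < i then qa (i - 1) l else 0)
      + (if l \<ge> i then qa (i - 1) (i - 1) else 0)
      + (if l > i then qa (n - i) (l - i) else 0))"

definition xlnx :: "real \<Rightarrow> real" where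
  "xlnx x = (if x = 0 then 0 else x * ln x)"

definition Cx :: "real \<Rightarrow> real" where
  "Cx x = 1 + 2 * xlnx x + 2 * xlnx (1 - x)"

definition Ctx :: "real \<Rightarrow> real \<Rightarrow> real" where
  "Ctx t x = Cx x + 2 * (if t < x then
      -1 + x + xlnx (1 - t) - xlnx (1 - x) - xlnx (x - t) else 0)"

end

theory Submission
  imports Defs "HOL-Real_Asymp.Real_Asymp"
begin

lemma cont_xlnx: "continuous_on {0..} xlnx"
  unfolding continuous_on_eq_continuous_within
proof (intro ballI)
  fix y :: real assume "y \<in> {0..}"
  show "continuous (at y within {0..}) xlnx"
  proof (cases "y = 0")
    case True
    have "((\<lambda>x::real. x * ln x) \<longlongrightarrow> 0) (at_right 0)" by real_asymp
    moreover have "eventually (\<lambda>x::real. x * ln x = xlnx x) (at_right 0)"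
      using eventually_at_right_less[of 0] by eventually_elim (auto simp: xlnx_def)
    ultimately have "(xlnx \<longlongrightarrow> 0) (at_right 0)" using tendsto_cong by fastforce
    then show ?thesis using True by (simp add: continuous_within at_within_Ici_at_right xlnx_def)
  next
    case False
    then have yp: "y > 0" using \<open>y \<in> {0..}\<close> by auto
    have "eventually (\<lambda>x. xlnx x = x * ln x) (nhds y)"
      using eventually_nhds_in_open[of "{0<..}" y] yp
      by (auto elim!: eventually_mono simp: xlnx_def)
    moreover have "isCont (\<lambda>x. x * ln x) y" using yp by (intro continuous_intros) auto
    ultimately have "isCont xlnx y" using isCont_cong by metis
    then show ?thesis using continuous_at_imp_continuous_within by blast
  qed
qed

lemma tendsto_xlnx:
  assumes "(f \<longlongrightarrow> u) F" "eventually (\<lambda>n. f n \<ge> 0) F" "u \<ge> 0"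
  shows "((\<lambda>n. xlnx (f n)) \<longlongrightarrow> xlnx u) F"
  using continuous_on_tendsto_compose[OF cont_xlnx assms(1)] assms(2,3) by auto

lemma H_harm: "H m = harm m"
  by (simp add: H_def harm_def divide_inverse)

lemma gamma_le: "m > 0 \<Longrightarrow> euler_mascheroni \<le> H m - ln (real m)"
  unfolding H_harm
  by (rule LIMSEQ_le_const2[OF euler_mascheroni_LIMSEQ]) (use euler_mascheroni_sequence_decreasing in blast)

lemma incseq_aux: "harm k - ln (real k + 1) \<le> harm (Suc k) - ln (real (Suc k) + 1)"
proof -
  have "ln (real (Suc k) + 1) - ln (real (Suc k)) < 1 / real (Suc k)"
    by (rule ln_diff_le_inverse) auto
  then show ?thesis by (simp add: harm_Suc field_simps add_ac)
qed

lemma gamma_ge: "H m - ln (real m + 1) \<le> euler_mascheroni"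
  unfolding H_harm
proof (rule LIMSEQ_le_const[OF euler_mascheroni_LIMSEQ], intro exI allI impI)
  fix k assume "k \<ge> Suc m"
  have "harm m - ln (real m + 1) \<le> harm k - ln (real k + 1)"
    using \<open>k \<ge> Suc m\<close> incseq_aux by (intro incseqD[of "\<lambda>k. harm k - ln (real k + 1) :: real"]) (auto intro: incseq_SucI)
  also have "\<dots> \<le> harm k - ln (real k)" using \<open>k \<ge> Suc m\<close> by simp
  finally show "harm m - ln (real m + 1) \<le> harm k - ln (real k)" .
qed

definition E :: "nat \<Rightarrow> nat \<Rightarrow> real" where
  "E n m = (real m / real n) * H m - (real m / real n) * ln (real n) - xlnx (real m / real n) - euler_mascheroni * (real m / real n)"

lemma E_bound: assumes "n \<ge> 1" shows "\<bar>E n m\<bar> \<le> 1 / real n"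
proof (cases "m = 0")
  case True then show ?thesis by (simp add: E_def xlnx_def H_def)
next
  case False
  then have mp: "real m > 0" by simp
  have np: "real n > 0" using assms by simp
  have x: "xlnx (real m / real n) = (real m / real n) * (ln (real m) - ln (real n))"
    using mp np by (simp add: xlnx_def ln_div)
  have e: "E n m = (real m / real n) * (H m - ln (real m) - euler_mascheroni)"
    unfolding E_def x by (simp add: algebra_simps add_divide_distrib)
  have a: "0 \<le> H m - ln (real m) - euler_mascheroni" using gamma_le[of m] False by simp
  have "ln (real m + 1) - ln (real m) < 1 / real m" by (rule ln_diff_le_inverse) (use False in simp)
  then have b: "H m - ln (real m) - euler_mascheroni \<le> 1 / real m" using gamma_ge[of m] by simp
  have "\<bar>E n m\<bar> = (real m / real n) * (H m - ln (real m) - euler_mascheroni)"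
    using a mp np e by simp
  also have "\<dots> \<le> (real m / real n) * (1 / real m)"
    using b mp np by (intro mult_left_mono) auto
  also have "\<dots> = 1 / real n" using mp by simp
  finally show ?thesis .
qed

lemma qa_formula: assumes "q \<le> p" "q \<noteq> 0 \<or> p = 0"
  shows "qa p q = 2 * real p + 2 * (real p + 1) * H p - 2 * (real (p + 1 - q) + 2) * H (p + 1 - q) - 6 * real q + 6"
  using assms by (auto simp: qa_def of_nat_diff H_def)

definition Mn :: "nat \<Rightarrow> nat \<Rightarrow> nat \<Rightarrow> real" where
  "Mn n p q = 2 * real p / real n + 2 * (real p / real n - real (p + 1 - q) / real n) * ln (real n)
     + 2 * xlnx (real p / real n) - 2 * xlnx (real (p + 1 - q) / real n)
     + 2 * euler_mascheroni * (real p / real n - real (p + 1 - q) / real n) - 6 * real q / real n"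

definition Rn :: "nat \<Rightarrow> nat \<Rightarrow> nat \<Rightarrow> real" where
  "Rn n p q = 2 * E n p - 2 * E n (p + 1 - q) + 2 * H p / real n - 4 * H (p + 1 - q) / real n + 6 / real n"

lemma qa_div: assumes "q \<le> p" "q \<noteq> 0 \<or> p = 0" "n \<ge> 1"
  shows "qa p q / real n = Mn n p q + Rn n p q"
proof -
  define r where "r = p + 1 - q"
  have np: "real n > 0" using assms by simp
  have eq: "(real m / real n) * H m = (real m / real n) * ln (real n) + xlnx (real m / real n) + euler_mascheroni * (real m / real n) + E n m" for m
    by (simp add: E_def)
  have "qa p q / real n = 2 * real p / real n + 2 * ((real p / real n) * H p) + 2 * H p / real n
     - 2 * ((real r / real n) * H r) - 4 * H r / real n - 6 * real q / real n + 6 / real n"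
    unfolding qa_formula[OF assms(1,2)] r_def[symmetric] using np
    by (simp add: field_simps)
  also have "\<dots> = Mn n p q + Rn n p q"
    unfolding eq Mn_def Rn_def r_def[symmetric] by (simp add: algebra_simps)
  finally show ?thesis .
qed

lemma H_nonneg: "H m \<ge> 0" by (simp add: H_def sum_nonneg)
lemma H_mono: "m \<le> k \<Longrightarrow> H m \<le> H k" unfolding H_harm by (rule harm_mono)
lemma H_Suc_le: "H (Suc k) \<le> H k + 1" unfolding H_harm by (simp add: harm_Suc inverse_le_1_iff)

lemma Rn_bound: assumes "p \<le> n" "n \<ge> 1"
  shows "\<bar>Rn n p q\<bar> \<le> (16 + 6 * H n) / real n"
proof -
  have np: "real n > 0" using assms by simp
  have e1: "\<bar>E n p\<bar> \<le> 1 / real n" and e2: "\<bar>E n (p + 1 - q)\<bar> \<le> 1 / real n" using E_bound assms by auto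
  have h1: "H p \<le> H n" using assms by (intro H_mono)
  have "H (p + 1 - q) \<le> H (Suc n)" by (intro H_mono) (use assms in auto)
  then have h2: "H (p + 1 - q) \<le> H n + 1" using H_Suc_le[of n] by linarith
  have "\<bar>Rn n p q\<bar> \<le> 2 * \<bar>E n p\<bar> + 2 * \<bar>E n (p + 1 - q)\<bar> + 2 * H p / real n + 4 * H (p + 1 - q) / real n + 6 / real n"
  proof -
    have t: "\<bar>a - b + c - d + e\<bar> \<le> \<bar>a\<bar> + \<bar>b\<bar> + \<bar>c\<bar> + \<bar>d\<bar> + \<bar>e\<bar>" for a b c d e :: real by arith
    show ?thesis unfolding Rn_def using t[of "2 * E n p" "2 * E n (p + 1 - q)" "2 * H p / real n" "4 * H (p + 1 - q) / real n" "6 / real n"]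
      H_nonneg[of p] H_nonneg[of "p+1-q"] np by (simp add: abs_mult)
  qed
  also have "\<dots> \<le> 2 * (1 / real n) + 2 * (1 / real n) + 2 * H n / real n + 4 * (H n + 1) / real n + 6 / real n"
    using e1 e2 h1 h2 np by (intro add_mono mult_left_mono divide_right_mono) auto
  also have "\<dots> \<le> (16 + 6 * H n) / real n" using np by (simp add: field_simps)
  finally show ?thesis .
qed

lemma bound_tendsto: "(\<lambda>n. (16 + 6 * H n) / real n) \<longlonglongrightarrow> 0"
proof -
  have a: "(\<lambda>n. H n - ln (real n)) \<longlonglongrightarrow> euler_mascheroni"
    unfolding H_harm by (rule euler_mascheroni_LIMSEQ)
  have b: "(\<lambda>n::nat. 1 / real n) \<longlonglongrightarrow> 0" by real_asymp
  have c: "(\<lambda>n::nat. ln (real n) / real n) \<longlonglongrightarrow> 0" by real_asymp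
  have "(\<lambda>n. 16 * (1 / real n) + 6 * ((H n - ln (real n)) * (1 / real n)) + 6 * (ln (real n) / real n)) \<longlonglongrightarrow> 16 * 0 + 6 * (euler_mascheroni * 0) + 6 * 0"
    by (intro tendsto_intros a b c)
  moreover have "(\<lambda>n. 16 * (1 / real n) + 6 * ((H n - ln (real n)) * (1 / real n)) + 6 * (ln (real n) / real n)) = (\<lambda>n. (16 + 6 * H n) / real n)"
    by (rule ext, rename_tac n, case_tac "n = 0") (simp_all add: field_simps)
  ultimately show ?thesis by simp
qed

lemma Rn_tendsto: assumes "eventually (\<lambda>n. p n \<le> n) sequentially"
  shows "(\<lambda>n. Rn n (p n) (q n)) \<longlonglongrightarrow> 0"
proof (rule Lim_null_comparison[OF _ bound_tendsto])
  show "\<forall>\<^sub>F n in sequentially. norm (Rn n (p n) (q n)) \<le> (16 + 6 * H n) / real n"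
    using assms eventually_ge_at_top[of 1]
    by eventually_elim (use Rn_bound in auto)
qed

lemma case_lt: assumes "n \<ge> 1" "1 \<le> l" "l < i" "i \<le> n"
  shows "Cd n l i = -1 - 3 / real n + 2 * real i / real n + 2 * xlnx ((real i - 1) / real n)
     - 2 * xlnx ((real i - real l) / real n) + 2 * xlnx ((real n + 1 - real l) / real n)
     + Rn n (i - 1) l - Rn n n l"
proof -
  have np: "real n > 0" using assms by simp
  have "Cd n l i = (real n - 1) / real n - qa n l / real n + qa (i - 1) l / real n"
    unfolding Cd_def using assms np by (simp add: field_simps)
  also have "\<dots> = (real n - 1) / real n - (Mn n n l + Rn n n l) + (Mn n (i - 1) l + Rn n (i - 1) l)"
    using assms by (simp add: qa_div)
  also have "\<dots> = -1 - 3 / real n + 2 * real i / real n + 2 * xlnx ((real i - 1) / real n)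
     - 2 * xlnx ((real i - real l) / real n) + 2 * xlnx ((real n + 1 - real l) / real n)
     + Rn n (i - 1) l - Rn n n l"
  proof -
    have c1: "real (n + 1 - l) = real n + 1 - real l" using assms by (simp add: of_nat_diff)
    have c2: "real (i - 1 + 1 - l) = real i - real l" using assms by (simp add: of_nat_diff)
    have c3: "real (i - 1) = real i - 1" using assms by (simp add: of_nat_diff)
    have x1: "xlnx (real n / real n) = 0" using np by (simp add: xlnx_def)
    show ?thesis unfolding Mn_def c1 c2 c3 x1 using np by (simp add: field_simps)
  qed
  finally show ?thesis .
qed

lemma case_gt: assumes "n \<ge> 1" "1 \<le> i" "i < l" "l \<le> n"
  shows "Cd n l i = 1 + 3 / real n - 4 * (ln (real n) / real n) - 4 * euler_mascheroni / real n
     + 2 * xlnx ((real i - 1) / real n) + 2 * xlnx ((real n - real i) / real n) - 2 * xlnx (1 / real n)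
     + Rn n (i - 1) (i - 1) + Rn n (n - i) (l - i) - Rn n n l"
proof -
  have np: "real n > 0" using assms by simp
  have "Cd n l i = (real n - 1) / real n - qa n l / real n + qa (i - 1) (i - 1) / real n + qa (n - i) (l - i) / real n"
    unfolding Cd_def using assms np by (simp add: field_simps)
  also have "\<dots> = (real n - 1) / real n - (Mn n n l + Rn n n l) + (Mn n (i - 1) (i - 1) + Rn n (i - 1) (i - 1))
      + (Mn n (n - i) (l - i) + Rn n (n - i) (l - i))"
    using assms by (simp add: qa_div)
  also have "\<dots> = 1 + 3 / real n - 4 * (ln (real n) / real n) - 4 * euler_mascheroni / real n
     + 2 * xlnx ((real i - 1) / real n) + 2 * xlnx ((real n - real i) / real n) - 2 * xlnx (1 / real n)
     + Rn n (i - 1) (i - 1) + Rn n (n - i) (l - i) - Rn n n l"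
  proof -
    have c1: "real (n + 1 - l) = real n + 1 - real l" using assms by (simp add: of_nat_diff)
    have c2: "real (i - 1 + 1 - (i - 1)) = 1" using assms by (simp add: of_nat_diff)
    have c3: "real (i - 1) = real i - 1" using assms by (simp add: of_nat_diff)
    have c4: "real (n - i + 1 - (l - i)) = real n + 1 - real l" using assms by (simp add: of_nat_diff)
    have c5: "real (n - i) = real n - real i" using assms by (simp add: of_nat_diff)
    have c6: "real (l - i) = real l - real i" using assms by (simp add: of_nat_diff)
    have x1: "xlnx (real n / real n) = 0" using np by (simp add: xlnx_def)
    show ?thesis unfolding Mn_def c1 c2 c3 c4 c5 c6 x1 using np by (simp add: field_simps)
  qed
  finally show ?thesis .
qed

theorem proposition5p5:
  fixes l i :: "nat \<Rightarrow> nat" and t x :: real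
  assumes "\<And>n. n \<ge> 1 \<Longrightarrow> 1 \<le> l n \<and> l n \<le> n"
    and "\<And>n. n \<ge> 1 \<Longrightarrow> 1 \<le> i n \<and> i n \<le> n"
    and "(\<lambda>n. real (l n) / real n) \<longlonglongrightarrow> t"
    and "(\<lambda>n. real (i n) / real n) \<longlonglongrightarrow> x"
    and "0 < t" and "t \<le> 1" and "0 \<le> x" and "x \<le> 1" and "t \<noteq> x"
  shows "(\<lambda>n. Cd n (l n) (i n)) \<longlonglongrightarrow> Ctx t x"
proof -
  note ev1 = eventually_ge_at_top[of "1::nat"]
  have inv: "(\<lambda>n::nat. 1 / real n) \<longlonglongrightarrow> 0" by real_asymp
  have lnn: "(\<lambda>n::nat. ln (real n) / real n) \<longlonglongrightarrow> 0" by real_asymp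
  have a1: "(\<lambda>n. (real (i n) - 1) / real n) \<longlonglongrightarrow> x"
    using tendsto_diff[OF assms(4) inv] by (simp add: diff_divide_distrib)
  have a2: "(\<lambda>n. (real (i n) - real (l n)) / real n) \<longlonglongrightarrow> x - t"
    using tendsto_diff[OF assms(4) assms(3)] by (simp add: diff_divide_distrib)
  have a3: "(\<lambda>n. (real n + 1 - real (l n)) / real n) \<longlonglongrightarrow> 1 - t"
  proof -
    have h: "(\<lambda>n. 1 + 1 / real n - real (l n) / real n) \<longlonglongrightarrow> 1 - t"
      using tendsto_diff[OF tendsto_add[OF tendsto_const inv] assms(3), of 1] by simp
    show ?thesis
    proof (rule Lim_transform_eventually[OF h])
    show "\<forall>\<^sub>F n in sequentially. 1 + 1 / real n - real (l n) / real n = (real n + 1 - real (l n)) / real n"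
      using ev1 by eventually_elim (simp add: field_simps)
  qed
  qed
  have a5: "(\<lambda>n. (real n - real (i n)) / real n) \<longlonglongrightarrow> 1 - x"
  proof (rule Lim_transform_eventually[OF tendsto_diff[OF tendsto_const assms(4)]])
    show "\<forall>\<^sub>F n in sequentially. 1 - real (i n) / real n = (real n - real (i n)) / real n"
      using ev1 by eventually_elim (simp add: field_simps)
  qed
  have R1: "(\<lambda>n. Rn n n (l n)) \<longlonglongrightarrow> 0" by (rule Rn_tendsto) simp
  have R2: "(\<lambda>n. Rn n (i n - 1) (f n)) \<longlonglongrightarrow> 0" for f
    by (rule Rn_tendsto, rule eventually_mono[OF ev1]) (use assms(2) in force)
  have R3: "(\<lambda>n. Rn n (n - i n) (f n)) \<longlonglongrightarrow> 0" for f
    by (rule Rn_tendsto) simp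
  have dif: "(\<lambda>n. real (i n) / real n - real (l n) / real n) \<longlonglongrightarrow> x - t"
    by (intro tendsto_intros assms)
  show ?thesis
  proof (cases "t < x")
    case True
    have "eventually (\<lambda>n. real (i n) / real n - real (l n) / real n > 0) sequentially"
      using order_tendstoD(1)[OF dif, of 0] True by simp
    then have evlt: "eventually (\<lambda>n. l n < i n) sequentially"
      using ev1 by eventually_elim (auto simp: field_simps)
    have x1: "(\<lambda>n. xlnx ((real (i n) - 1) / real n)) \<longlonglongrightarrow> xlnx x"
      by (rule tendsto_xlnx[OF a1]) (use assms(2,7) in \<open>force intro!: eventually_mono[OF ev1]\<close>)+
    have x2: "(\<lambda>n. xlnx ((real (i n) - real (l n)) / real n)) \<longlonglongrightarrow> xlnx (x - t)"
      by (rule tendsto_xlnx[OF a2]) (use True in \<open>force intro!: eventually_mono[OF evlt]\<close>)+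
    have x3: "(\<lambda>n. xlnx ((real n + 1 - real (l n)) / real n)) \<longlonglongrightarrow> xlnx (1 - t)"
      by (rule tendsto_xlnx[OF a3]) (use assms(1,6) in \<open>force intro!: eventually_mono[OF ev1]\<close>)+
    have lim: "(\<lambda>n. -1 - 3 * (1 / real n) + 2 * (real (i n) / real n) + 2 * xlnx ((real (i n) - 1) / real n)
     - 2 * xlnx ((real (i n) - real (l n)) / real n) + 2 * xlnx ((real n + 1 - real (l n)) / real n)
     + Rn n (i n - 1) (l n) - Rn n n (l n)) \<longlonglongrightarrow>
      -1 - 3 * 0 + 2 * x + 2 * xlnx x - 2 * xlnx (x - t) + 2 * xlnx (1 - t) + 0 - 0"
      by (intro tendsto_intros x1 x2 x3 inv assms(4) R1 R2)
    have ctx: "Ctx t x = -1 - 3 * 0 + 2 * x + 2 * xlnx x - 2 * xlnx (x - t) + 2 * xlnx (1 - t) + 0 - 0"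
      using True by (simp add: Ctx_def Cx_def)
    show ?thesis unfolding ctx
    proof (rule Lim_transform_eventually[OF lim])
      show "\<forall>\<^sub>F n in sequentially. -1 - 3 * (1 / real n) + 2 * (real (i n) / real n) + 2 * xlnx ((real (i n) - 1) / real n)
     - 2 * xlnx ((real (i n) - real (l n)) / real n) + 2 * xlnx ((real n + 1 - real (l n)) / real n)
     + Rn n (i n - 1) (l n) - Rn n n (l n) = Cd n (l n) (i n)"
        using ev1 evlt
      proof eventually_elim
        case (elim n)
        show ?case using case_lt[of n "l n" "i n"] elim assms(1,2)[of n] by simp
      qed
    qed
  next
    case False
    then have tx: "x < t" using assms(9) by simp
    have "eventually (\<lambda>n. real (i n) / real n - real (l n) / real n < 0) sequentially"
      using order_tendstoD(2)[OF dif, of 0] tx by simp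
    then have evgt: "eventually (\<lambda>n. i n < l n) sequentially"
      using ev1 by eventually_elim (auto simp: field_simps)
    have x1: "(\<lambda>n. xlnx ((real (i n) - 1) / real n)) \<longlonglongrightarrow> xlnx x"
      by (rule tendsto_xlnx[OF a1]) (use assms(2,7) in \<open>force intro!: eventually_mono[OF ev1]\<close>)+
    have x2: "(\<lambda>n. xlnx ((real n - real (i n)) / real n)) \<longlonglongrightarrow> xlnx (1 - x)"
      by (rule tendsto_xlnx[OF a5]) (use assms(2,8) in \<open>force intro!: eventually_mono[OF ev1]\<close>)+
    have x3: "(\<lambda>n. xlnx (1 / real n)) \<longlonglongrightarrow> xlnx 0"
      by (rule tendsto_xlnx[OF inv]) auto
    have lim: "(\<lambda>n. 1 + 3 * (1 / real n) - 4 * (ln (real n) / real n) - 4 * euler_mascheroni * (1 / real n)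
     + 2 * xlnx ((real (i n) - 1) / real n) + 2 * xlnx ((real n - real (i n)) / real n) - 2 * xlnx (1 / real n)
     + Rn n (i n - 1) (i n - 1) + Rn n (n - i n) (l n - i n) - Rn n n (l n)) \<longlonglongrightarrow>
      1 + 3 * 0 - 4 * 0 - 4 * euler_mascheroni * 0 + 2 * xlnx x + 2 * xlnx (1 - x) - 2 * xlnx 0 + 0 + 0 - 0"
      by (intro tendsto_intros x1 x2 x3 inv lnn R1 R2 R3)
    have ctx: "Ctx t x = 1 + 3 * 0 - 4 * 0 - 4 * euler_mascheroni * 0 + 2 * xlnx x + 2 * xlnx (1 - x) - 2 * xlnx 0 + 0 + 0 - 0"
      using tx by (simp add: Ctx_def Cx_def xlnx_def)
    show ?thesis unfolding ctx
    proof (rule Lim_transform_eventually[OF lim])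
      show "\<forall>\<^sub>F n in sequentially. 1 + 3 * (1 / real n) - 4 * (ln (real n) / real n) - 4 * euler_mascheroni * (1 / real n)
     + 2 * xlnx ((real (i n) - 1) / real n) + 2 * xlnx ((real n - real (i n)) / real n) - 2 * xlnx (1 / real n)
     + Rn n (i n - 1) (i n - 1) + Rn n (n - i n) (l n - i n) - Rn n n (l n) = Cd n (l n) (i n)"
        using ev1 evgt
      proof eventually_elim
        case (elim n)
        show ?case using case_gt[of n "i n" "l n"] elim assms(1,2)[of n] by simp
      qed
    qed
  qed
qed

end
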